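(* Assume $\sigma_1\equiv0$. Fix $(t,x,y)$ and suppose $u\mapsto\Psi_{t,x,y}(u):=m(t,y,u)+\frac{\mu(t,y)^2-\sigma(t,y,u)^2\sigma_2(t,y)^2A(x)^2}{2\sigma_2(t,y)^2A(x)}$ is strictly concave on $[0,I]$. Then the optimal reinsurance strategy (the maximiser of $\Psi_{t,x,y}$ over $[0,I]$) is $$u^*(t,x,y)=\begin{cases}0,&(t,x,y)\in A_0,\\ \hat u(t,x,y),&(t,x,y)\in[0,T]\times\mathbb R^2\setminus(A_0\cup A_I),\\ I,&(t,x,y)\in A_I,\end{cases}$$ where $A_0=\{(t,x,y): \frac{\partial m}{\partial u}(t,y,0)\le A(x)\sigma(t,y,0)\frac{\partial\sigma}{\partial u}(t,y,0)\}$, $A_I=\{(t,x,y): \frac{\partial m}{\partial u}(t,y,I)\ge A(x)\sigma(t,y,I)\frac{\partial\sigma}{\partial u}(t,y,I)\}$, and $\hat u(t,x,y)$ is the unique solution $u$ of $\frac{\partial m}{\partial u}(t,y,u)=A(x)\sigma(t,y,u)\frac{\partial\sigma}{\partial u}(t,y,u)$.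
   Context: $I\in(0,\infty]$; $m(t,y,u)$ and $\sigma(t,y,u)$, $u\in[0,I]$, are continuously differentiable drift and volatility of the insurer's surplus under retention level $u$; $\mu(t,y),\sigma_2(t,y)>0$ are the drift and the (independent) volatility of the risky asset, and the risky asset's loading $\sigma_1$ on the insurance Brownian motion is zero (conditionally independent markets). The insurer's surplus with investment $a_t$ is $dX_t=\{m(t,Y_t,u_t)+a_t\mu(t,Y_t)\}dt+\sigma(t,Y_t,u_t)dW^1_t+a_t\sigma_2(t,Y_t)dW^2_t$, and $\Psi_{t,x,y}$ is the function to be maximised in the HJB equation under the ansatz $V(t,x,y)=U(x)\tilde V(t,y)$. $U$ is a SAHARA utility: $A(x):=-U''(x)/U'(x)=\alpha/\sqrt{b^2+(x-d)^2}$, $\alpha>0$, $b>0$, $d\in\mathbb R$. *)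

theory Defs
  imports "HOL-Analysis.Analysis"
begin

definition sahara_A :: "real \<Rightarrow> real \<Rightarrow> real \<Rightarrow> real \<Rightarrow> real" where
  "sahara_A \<alpha> b d x = \<alpha> / sqrt (b\<^sup>2 + (x - d)\<^sup>2)"

definition strictly_concave_on :: "real set \<Rightarrow> (real \<Rightarrow> real) \<Rightarrow> bool" where
  "strictly_concave_on S f \<longleftrightarrow>
     (\<forall>x\<in>S. \<forall>y\<in>S. x \<noteq> y \<longrightarrow> (\<forall>c::real. 0 < c \<and> c < 1 \<longrightarrow>
        f (c * x + (1 - c) * y) > c * f x + (1 - c) * f y))"

definition retention_set :: "ereal \<Rightarrow> real set" where
  "retention_set I = {u. 0 \<le> u \<and> ereal u \<le> I}"

definition Psi :: "(real \<Rightarrow> real \<Rightarrow> real \<Rightarrow> real) \<Rightarrow> (real \<Rightarrow> real \<Rightarrow> real \<Rightarrow> real)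
    \<Rightarrow> (real \<Rightarrow> real \<Rightarrow> real) \<Rightarrow> (real \<Rightarrow> real \<Rightarrow> real) \<Rightarrow> (real \<Rightarrow> real)
    \<Rightarrow> real \<Rightarrow> real \<Rightarrow> real \<Rightarrow> real \<Rightarrow> real" where
  "Psi m \<sigma> \<mu> \<sigma>\<^sub>2 A t x y u =
     m t y u + ((\<mu> t y)\<^sup>2 - (\<sigma> t y u)\<^sup>2 * (\<sigma>\<^sub>2 t y)\<^sup>2 * (A x)\<^sup>2) / (2 * (\<sigma>\<^sub>2 t y)\<^sup>2 * A x)"

definition is_maximiser_on :: "real set \<Rightarrow> (real \<Rightarrow> real) \<Rightarrow> real \<Rightarrow> bool" where
  "is_maximiser_on S f u \<longleftrightarrow> u \<in> S \<and> (\<forall>v\<in>S. f v \<le> f u)"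

end

theory Submission
  imports Defs
begin

lemma weak_tangent:
  fixes f :: "real \<Rightarrow> real"
  assumes conc: "\<And>x y c. x \<in> S \<Longrightarrow> y \<in> S \<Longrightarrow> 0 < c \<Longrightarrow> c < 1 \<Longrightarrow>
                  f (c*x + (1-c)*y) \<ge> c*f x + (1-c)*f y"
    and cvx: "convex S" and a: "a \<in> S" and z: "z \<in> S"
    and der: "(f has_real_derivative D) (at a within S)"
  shows "f z \<le> f a + D*(z-a)"
proof -
  define g where "g = (\<lambda>c::real. a + c*(z-a))"
  have sub: "g ` {0..1} \<subseteq> S"
  proof
    fix w assume "w \<in> g ` {0..1}"
    then obtain c where c: "0 \<le> c" "c \<le> 1" "w = g c" by auto
    have "w = (1 - c) *\<^sub>R a + c *\<^sub>R z" using c by (simp add: g_def algebra_simps)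
    then show "w \<in> S" using convexD_alt[OF cvx a z, of c] c by simp
  qed
  have gd: "(g has_real_derivative (z-a)) (at 0 within {0..1})"
    unfolding g_def by (auto intro!: derivative_eq_intros)
  have fd: "(f has_real_derivative D) (at (g 0) within g ` {0..1})"
    using has_field_derivative_subset[OF der sub] by (simp add: g_def)
  have "(f \<circ> g has_real_derivative D * (z-a)) (at 0 within {0..1})"
    by (rule DERIV_image_chain[OF fd gd])
  then have "((\<lambda>c. ((f \<circ> g) c - (f \<circ> g) 0) / (c - 0)) \<longlongrightarrow> D*(z-a)) (at 0 within {0..1})"
    by (simp only: has_field_derivative_iff)
  then have lim: "((\<lambda>c. (f (g c) - f (g 0)) / (c - 0)) \<longlongrightarrow> D*(z-a)) (at_right 0)"
    using at_within_Icc_at_right[of "0::real" 1] by (simp add: o_def)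
  have ev: "\<forall>\<^sub>F c in at_right 0. f z - f a \<le> (f (g c) - f (g 0)) / (c - 0)"
  proof -
    have "\<forall>\<^sub>F c in at_right (0::real). 0 < c \<and> c < 1"
      unfolding eventually_at_right[of 0 "1::real", simplified] by (intro exI[of _ 1]) auto
    then show ?thesis
    proof (rule eventually_mono)
      fix c :: real assume c: "0 < c \<and> c < 1"
      have gc: "g c = c*z + (1-c)*a" "g 0 = a" by (auto simp: g_def algebra_simps)
      have "f (g c) \<ge> c*f z + (1-c)*f a" unfolding gc using conc[OF z a] c by auto
      then have "f (g c) - f (g 0) \<ge> c * (f z - f a)" unfolding gc(2) by (simp add: algebra_simps)
      then show "f z - f a \<le> (f (g c) - f (g 0)) / (c - 0)"
        using c by (simp add: field_simps)
    qed
  qed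
  have "f z - f a \<le> D*(z-a)"
    by (rule tendsto_lowerbound[OF lim ev]) simp
  then show ?thesis by simp
qed

lemma strict_tangent:
  fixes f :: "real \<Rightarrow> real"
  assumes sc: "strictly_concave_on S f"
    and cvx: "convex S" and a: "a \<in> S" and z: "z \<in> S" and ne: "z \<noteq> a"
    and der: "(f has_real_derivative D) (at a within S)"
  shows "f z < f a + D*(z-a)"
proof -
  have conc: "f (c*x + (1-c)*y) \<ge> c*f x + (1-c)*f y"
    if "x \<in> S" "y \<in> S" "0 < c" "c < 1" for x y c
  proof (cases "x = y")
    case True then show ?thesis by (simp add: algebra_simps)
  next
    case False then show ?thesis using sc that unfolding strictly_concave_on_def
      by (meson less_imp_le)
  qed
  define w where "w = (1/2)*z + (1 - 1/2)*a"
  have wS: "w \<in> S" using convexD_alt[OF cvx z a, of "1/2"] by (simp add: w_def)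
  have hc: "\<forall>c. 0 < c \<and> c < 1 \<longrightarrow> c*f z + (1-c)*f a < f (c*z + (1-c)*a)"
    using sc z a ne unfolding strictly_concave_on_def by blast
  have s1: "f w > (1/2)*f z + (1-1/2)*f a"
    using spec[OF hc, of "1/2"] unfolding w_def by simp
  have s2: "f w \<le> f a + D*(w-a)" by (rule weak_tangent[OF conc cvx a wS der])
  show ?thesis using s1 s2 by (simp add: w_def algebra_simps)
qed

theorem proposition5p6:
  fixes m \<sigma> m_u \<sigma>_u :: "real \<Rightarrow> real \<Rightarrow> real \<Rightarrow> real"
    and \<mu> \<sigma>\<^sub>2 :: "real \<Rightarrow> real \<Rightarrow> real"
    and I :: ereal and \<alpha> b d T t x y :: real
  defines "U \<equiv> retention_set I"
    and "A \<equiv> sahara_A \<alpha> b d"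
  assumes I_pos: "0 < I"
    and \<alpha>_pos: "\<alpha> > 0" and b_pos: "b > 0"
    and t_range: "0 \<le> t" "t \<le> T"
    and \<sigma>\<^sub>2_pos: "\<And>s z. \<sigma>\<^sub>2 s z > 0"
    and m_deriv: "\<And>u. u \<in> U \<Longrightarrow> ((m t y) has_real_derivative m_u t y u) (at u within U)"
    and \<sigma>_deriv: "\<And>u. u \<in> U \<Longrightarrow> ((\<sigma> t y) has_real_derivative \<sigma>_u t y u) (at u within U)"
    and m_u_cont: "continuous_on U (m_u t y)"
    and \<sigma>_u_cont: "continuous_on U (\<sigma>_u t y)"
    and concave: "strictly_concave_on U (Psi m \<sigma> \<mu> \<sigma>\<^sub>2 A t x y)"
  shows
    "let \<Psi> = Psi m \<sigma> \<mu> \<sigma>\<^sub>2 A t x y;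
         FOC = (\<lambda>u. m_u t y u = A x * \<sigma> t y u * \<sigma>_u t y u);
         inA0 = (m_u t y 0 \<le> A x * \<sigma> t y 0 * \<sigma>_u t y 0);
         inAI = (I \<noteq> \<infinity> \<and>
                 m_u t y (real_of_ereal I) \<ge> A x * \<sigma> t y (real_of_ereal I) * \<sigma>_u t y (real_of_ereal I))
     in (inA0 \<longrightarrow> (\<forall>u. is_maximiser_on U \<Psi> u \<longleftrightarrow> u = 0))
      \<and> (inAI \<longrightarrow> (\<forall>u. is_maximiser_on U \<Psi> u \<longleftrightarrow> u = real_of_ereal I))
      \<and> (\<not> inA0 \<and> \<not> inAI \<longrightarrow>
           (\<forall>u1\<in>U. \<forall>u2\<in>U. FOC u1 \<and> FOC u2 \<longrightarrow> u1 = u2)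
         \<and> (I \<noteq> \<infinity> \<longrightarrow> (\<exists>u\<in>U. FOC u))
         \<and> (\<forall>u. is_maximiser_on U \<Psi> u \<longleftrightarrow> u \<in> U \<and> FOC u))"
proof -
  define P where "P = Psi m \<sigma> \<mu> \<sigma>\<^sub>2 A t x y"
  define D where "D = (\<lambda>u. m_u t y u - A x * \<sigma> t y u * \<sigma>_u t y u)"
  have Ax: "A x > 0" unfolding A_def sahara_A_def using \<alpha>_pos b_pos
    by (intro divide_pos_pos) (auto intro!: add_pos_nonneg)
  have s2: "\<sigma>\<^sub>2 t y > 0" by (rule \<sigma>\<^sub>2_pos)
  have Icases: "I = \<infinity> \<or> (\<exists>r. I = ereal r \<and> 0 < r)"
    using I_pos by (cases I) auto
  have Ur: "U = {0..r}" if "I = ereal r" for r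
    using that unfolding U_def retention_set_def by auto
  have Uinf: "U = {0..}" if "I = \<infinity>"
    using that unfolding U_def retention_set_def by auto
  have cvx: "convex U" using Icases Ur Uinf by (auto simp: convex_real_interval)
  have U0: "0 \<in> U" using Icases Ur Uinf by auto
  have Uge: "u \<in> U \<Longrightarrow> 0 \<le> u" for u using Icases Ur Uinf by auto
  have derP: "(P has_real_derivative D u) (at u within U)" if u: "u \<in> U" for u
  proof -
    have "((\<lambda>v. m t y v + ((\<mu> t y)\<^sup>2 - (\<sigma> t y v)\<^sup>2 * (\<sigma>\<^sub>2 t y)\<^sup>2 * (A x)\<^sup>2) / (2 * (\<sigma>\<^sub>2 t y)\<^sup>2 * A x))
       has_real_derivative m_u t y u + (0 - (2 * \<sigma> t y u * \<sigma>_u t y u) * (\<sigma>\<^sub>2 t y)\<^sup>2 * (A x)\<^sup>2) / (2 * (\<sigma>\<^sub>2 t y)\<^sup>2 * A x)) (at u within U)"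
      using m_deriv[OF u] \<sigma>_deriv[OF u] Ax s2
      by (auto intro!: derivative_eq_intros)
    moreover have "m_u t y u + (0 - (2 * \<sigma> t y u * \<sigma>_u t y u) * (\<sigma>\<^sub>2 t y)\<^sup>2 * (A x)\<^sup>2) / (2 * (\<sigma>\<^sub>2 t y)\<^sup>2 * A x) = D u"
      using Ax s2 by (simp add: D_def field_simps power2_eq_square)
    ultimately show ?thesis unfolding P_def Psi_def[abs_def] by simp
  qed
  have tang: "P v < P u + D u * (v - u)" if "u \<in> U" "v \<in> U" "v \<noteq> u" for u v
    using strict_tangent[OF concave[folded P_def] cvx that derP[OF that(1)]] .
  have contD: "continuous_on U D"
  proof -
    have "continuous_on U (\<sigma> t y)"
      using \<sigma>_deriv by (meson DERIV_continuous continuous_on_eq_continuous_within)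
    then show ?thesis unfolding D_def
      by (intro continuous_intros m_u_cont \<sigma>_u_cont)
  qed
  have G1: "D 0 \<le> 0 \<Longrightarrow> is_maximiser_on U P u \<longleftrightarrow> u = 0" for u
  proof
    assume D0: "D 0 \<le> 0"
    { fix v assume v: "v \<in> U" "v \<noteq> 0"
      have "P v < P 0 + D 0 * (v - 0)" by (rule tang[OF U0 v])
      also have "\<dots> \<le> P 0" using D0 Uge[OF v(1)] by (simp add: mult_nonpos_nonneg)
      finally have "P v < P 0" . }
    note * = this
    { assume "is_maximiser_on U P u"
      then show "u = 0" using * U0 unfolding is_maximiser_on_def by force }
    { assume "u = 0" then show "is_maximiser_on U P u"
        using * U0 unfolding is_maximiser_on_def by (metis less_imp_le order_refl) }
  qed
  have G2: "I = ereal r \<Longrightarrow> D r \<ge> 0 \<Longrightarrow> is_maximiser_on U P u \<longleftrightarrow> u = r" for u r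
  proof
    assume Ir: "I = ereal r" and Dr: "D r \<ge> 0"
    have rU: "r \<in> U" using Ir Ur I_pos by auto
    { fix v assume v: "v \<in> U" "v \<noteq> r"
      have "P v < P r + D r * (v - r)" by (rule tang[OF rU v])
      also have "\<dots> \<le> P r" using Dr v Ur[OF Ir] by (simp add: mult_nonneg_nonpos)
      finally have "P v < P r" . }
    note * = this
    { assume "is_maximiser_on U P u"
      then show "u = r" using * rU unfolding is_maximiser_on_def by force }
    { assume "u = r" then show "is_maximiser_on U P u"
        using * rU unfolding is_maximiser_on_def by (metis less_imp_le order_refl) }
  qed
  have G3a: "u1 = u2" if "u1 \<in> U" "u2 \<in> U" "D u1 = 0" "D u2 = 0" for u1 u2
  proof (rule ccontr)
    assume "u1 \<noteq> u2"
    then have "P u2 < P u1" "P u1 < P u2" using tang[of u1 u2] tang[of u2 u1] that by auto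
    then show False by simp
  qed
  have G3b: "\<exists>u\<in>U. D u = 0" if "I = ereal r" "D 0 > 0" "D r < 0" for r
  proof -
    have "continuous_on {0..r} D" using contD Ur[OF that(1)] by simp
    moreover have "0 \<le> r" using that I_pos by auto
    moreover have "D r \<le> 0" "0 \<le> D 0" using that by auto
    ultimately have "\<exists>u. 0 \<le> u \<and> u \<le> r \<and> D u = 0"
      using IVT2'[of D r 0 0] by blast
    then obtain u where "0 \<le> u" "u \<le> r" "D u = 0" by blast
    then show ?thesis using Ur[OF that(1)] by auto
  qed
  have G3c: "is_maximiser_on U P u \<longleftrightarrow> u \<in> U \<and> D u = 0"
    if D0: "D 0 > 0" and Dr: "\<And>r. I = ereal r \<Longrightarrow> D r < 0" for u
  proof
    assume uD: "u \<in> U \<and> D u = 0"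
    then show "is_maximiser_on U P u" unfolding is_maximiser_on_def
      using tang[of u] by (metis add.right_neutral less_imp_le mult_zero_left order_refl)
  next
    assume mx: "is_maximiser_on U P u"
    then have uU: "u \<in> U" and le: "\<And>v. v \<in> U \<Longrightarrow> P v \<le> P u"
      unfolding is_maximiser_on_def by auto
    show "u \<in> U \<and> D u = 0"
    proof (rule ccontr)
      assume "\<not> (u \<in> U \<and> D u = 0)"
      then have "D u > 0 \<or> D u < 0" using uU by auto
      then show False
      proof
        assume pos: "D u > 0"
        obtain d where d: "d > 0" "\<And>h. h > 0 \<Longrightarrow> u + h \<in> U \<Longrightarrow> h < d \<Longrightarrow> P u < P (u + h)"
          using has_real_derivative_pos_inc_right[OF derP[OF uU] pos] by blast
        obtain h where h: "h > 0" "h < d" "u + h \<in> U"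
        proof (cases "I = \<infinity>")
          case True then show ?thesis using that[of "d/2"] d uU Uinf by auto
        next
          case False
          then obtain r where Ir: "I = ereal r" using Icases by auto
          have "u \<noteq> r" using Dr[OF Ir] pos by auto
          then have "u < r" using uU Ur[OF Ir] by auto
          define h where "h = min (d/2) ((r-u)/2)"
          have "0 < h" "h < d" "u + h \<le> r" using d(1) \<open>u < r\<close> unfolding h_def by (auto simp: min_def field_simps)
          then show ?thesis using that[of h] uU Ur[OF Ir] by auto
        qed
        then show False using d(2)[OF h(1) h(3) h(2)] le[OF h(3)] by simp
      next
        assume neg: "D u < 0"
        obtain d where d: "d > 0" "\<And>h. h > 0 \<Longrightarrow> u - h \<in> U \<Longrightarrow> h < d \<Longrightarrow> P u < P (u - h)"
          using has_real_derivative_neg_dec_left[OF derP[OF uU] neg] by blast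
        have "u \<noteq> 0" using D0 neg by auto
        then have u0: "u > 0" using Uge[OF uU] by auto
        define h where "h = min (d/2) (u/2)"
        have h: "h > 0" "h < d" "u - h \<in> U"
          using d(1) u0 uU Icases Ur Uinf unfolding h_def by auto
        then show False using d(2)[OF h(1) h(3) h(2)] le[OF h(3)] by simp
      qed
    qed
  qed
  show ?thesis
    unfolding Let_def P_def[symmetric]
  proof (intro conjI impI)
    assume "m_u t y 0 \<le> A x * \<sigma> t y 0 * \<sigma>_u t y 0"
    then show "\<forall>u. is_maximiser_on U P u = (u = 0)" using G1 by (simp add: D_def)
  next
    assume a: "I \<noteq> \<infinity> \<and> A x * \<sigma> t y (real_of_ereal I) * \<sigma>_u t y (real_of_ereal I) \<le> m_u t y (real_of_ereal I)"
    then obtain r where Ir: "I = ereal r" using Icases by auto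
    then show "\<forall>u. is_maximiser_on U P u = (u = real_of_ereal I)" using G2[OF Ir] a by (simp add: D_def)
  next
    assume a: "\<not> m_u t y 0 \<le> A x * \<sigma> t y 0 * \<sigma>_u t y 0 \<and>
      \<not> (I \<noteq> \<infinity> \<and> A x * \<sigma> t y (real_of_ereal I) * \<sigma>_u t y (real_of_ereal I) \<le> m_u t y (real_of_ereal I))"
    have D0: "D 0 > 0" using a by (simp add: D_def)
    have Dr: "D r < 0" if "I = ereal r" for r using a that by (simp add: D_def)
    show "\<forall>u1\<in>U. \<forall>u2\<in>U. m_u t y u1 = A x * \<sigma> t y u1 * \<sigma>_u t y u1 \<and> m_u t y u2 = A x * \<sigma> t y u2 * \<sigma>_u t y u2 \<longrightarrow> u1 = u2"
      using G3a by (simp add: D_def)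
  next
    assume a: "\<not> m_u t y 0 \<le> A x * \<sigma> t y 0 * \<sigma>_u t y 0 \<and>
      \<not> (I \<noteq> \<infinity> \<and> A x * \<sigma> t y (real_of_ereal I) * \<sigma>_u t y (real_of_ereal I) \<le> m_u t y (real_of_ereal I))"
    have D0: "D 0 > 0" using a by (simp add: D_def)
    have Dr: "D r < 0" if "I = ereal r" for r using a that by (simp add: D_def)
    assume "I \<noteq> \<infinity>"
    then obtain r where Ir: "I = ereal r" using Icases by auto
    show "\<exists>u\<in>U. m_u t y u = A x * \<sigma> t y u * \<sigma>_u t y u"
      using G3b[OF Ir D0 Dr[OF Ir]] by (simp add: D_def)
  next
    assume a: "\<not> m_u t y 0 \<le> A x * \<sigma> t y 0 * \<sigma>_u t y 0 \<and>
      \<not> (I \<noteq> \<infinity> \<and> A x * \<sigma> t y (real_of_ereal I) * \<sigma>_u t y (real_of_ereal I) \<le> m_u t y (real_of_ereal I))"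
    have D0: "D 0 > 0" using a by (simp add: D_def)
    have Dr: "D r < 0" if "I = ereal r" for r using a that by (simp add: D_def)
    show "\<forall>u. is_maximiser_on U P u = (u \<in> U \<and> m_u t y u = A x * \<sigma> t y u * \<sigma>_u t y u)"
      using G3c[OF D0 Dr] by (simp add: D_def)
  qed
qed
end
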